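(* Let $\mathbf i'=\eta_k\mathbf i$ be a 4-move, $i=i_k$, $j=i_{k+1}$. For $\mathbf g'=(g'_u)\in\mathbb Z^{\oplus\mathbb N}$ define $\mathbf g=(g_u)\in\mathbb Z^{\oplus\mathbb N}$ by: $A=g'_k+\mathsf c_{j,i}[-g'_{k+1}]_+$, $B=-g'_{k+1}+\mathsf c_{i,j}[-A]_+$, and $g_{k+3}=g'_{k+2}-\mathsf c_{j,i}[g'_{k+1}]_++[A]_+$, $g_{k+2}=g'_{k+3}-[-g'_{k+1}]_++[B]_+$, $g_{k+1}=-A+\mathsf c_{j,i}[-B]_+$, $g_k=-B$, $g_{k^-_{\mathbf i}}=g'_{(k+1)^-_{\mathbf i'}}+[g'_{k+1}]_+-[-B]_+$ (if $k^-_{\mathbf i}>0$), $g_{(k+1)^-_{\mathbf i}}=g'_{k^-_{\mathbf i'}}+[A]_+-\mathsf c_{j,i}[B]_+$ (if $(k+1)^-_{\mathbf i}>0$), and $g_u=g'_u$ for all other $u$. Then the map $\mathbf g'\mapsto\mathbf g$ sends the cone $C_{\mathbf i'}$ into the cone $C_{\mathbf i}$.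
   Context: $\mathfrak g$ is a complex finite-dimensional simple Lie algebra with index set $I$ and Cartan matrix $\mathsf C=(\mathsf c_{i,j})$. $\mathbb N=\{1,2,\dots\}$, $[a]_+=\max(a,0)$. $I^{(\infty)}$ is the set of sequences $\mathbf i=(i_u)_{u\in\mathbb N}\in I^{\mathbb N}$ in which each element of $I$ occurs infinitely often; $u^-_{\mathbf i}=\max(\{v<u:i_v=i_u\}\cup\{0\})$. A 4-move $\mathbf i'=\eta_k\mathbf i$ means $i_k=i_{k+2}=i'_{k+1}=i'_{k+3}$, $i_{k+1}=i_{k+3}=i'_k=i'_{k+2}$, $i_u=i'_u$ for $u\notin[k,k+3]$, and $\mathsf c_{i_{k+1},i_k}\mathsf c_{i_k,i_{k+1}}=2$ (so $(k+1)^-_{\mathbf i'}=k^-_{\mathbf i}$, $k^-_{\mathbf i'}=(k+1)^-_{\mathbf i}$). For $\mathbf i\in I^{\mathbb N}$, the cone $C_{\mathbf i}=\{\mathbf g=(g_u)\in\mathbb Z^{\oplus\mathbb N}:\sum_{v\ge u,\,i_v=i_u}g_v\ge0\ \text{for all }u\in\mathbb N\}$ ($\mathbb Z^{\oplus\mathbb N}$ = finitely supported integer sequences). *)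

theory Defs
  imports Complex_Main
begin

definition pos :: "int \<Rightarrow> int" where "pos a = max a 0"

(* Cartan matrix of a complex finite-dimensional simple Lie algebra, index set = finite type 'i:
   a generalized Cartan matrix which is indecomposable, symmetrizable, with positive definite
   symmetrization (= of finite type, connected Dynkin diagram). *)
definition cartan_simple :: "('i::finite \<Rightarrow> 'i \<Rightarrow> int) \<Rightarrow> bool" where
  "cartan_simple C \<longleftrightarrow>
     (\<forall>i. C i i = 2) \<and>
     (\<forall>i j. i \<noteq> j \<longrightarrow> C i j \<le> 0) \<and>
     (\<forall>i j. C i j = 0 \<longleftrightarrow> C j i = 0) \<and>
     (\<exists>d::'i \<Rightarrow> int. (\<forall>i. d i > 0) \<and> (\<forall>i j. d i * C i j = d j * C j i) \<and>
        (\<forall>x::'i \<Rightarrow> real. x \<noteq> (\<lambda>_. 0) \<longrightarrow>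
            (\<Sum>i\<in>UNIV. \<Sum>j\<in>UNIV. x i * real_of_int (d i * C i j) * x j) > 0)) \<and>
     (\<forall>S::'i set. S \<noteq> {} \<and> S \<noteq> UNIV \<longrightarrow> (\<exists>i\<in>S. \<exists>j. j \<notin> S \<and> C i j \<noteq> 0))"

(* sequences i = (i_u)_{u \<in> \<nat>}, \<nat> = {1,2,...}; the value at 0 is irrelevant *)
definition I_inf :: "(nat \<Rightarrow> 'i) \<Rightarrow> bool" where
  "I_inf s \<longleftrightarrow> (\<forall>a. infinite {u. 1 \<le> u \<and> s u = a})"

definition uminus_seq :: "(nat \<Rightarrow> 'i) \<Rightarrow> nat \<Rightarrow> nat" where
  "uminus_seq s u = Max ({v. 1 \<le> v \<and> v < u \<and> s v = s u} \<union> {0})"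

definition four_move :: "('i \<Rightarrow> 'i \<Rightarrow> int) \<Rightarrow> (nat \<Rightarrow> 'i) \<Rightarrow> (nat \<Rightarrow> 'i) \<Rightarrow> nat \<Rightarrow> bool" where
  "four_move C s s' k \<longleftrightarrow> 1 \<le> k \<and>
     s k = s (k+2) \<and> s k = s' (k+1) \<and> s k = s' (k+3) \<and>
     s (k+1) = s (k+3) \<and> s (k+1) = s' k \<and> s (k+1) = s' (k+2) \<and>
     (\<forall>u. 1 \<le> u \<and> (u < k \<or> k + 3 < u) \<longrightarrow> s u = s' u) \<and>
     C (s (k+1)) (s k) * C (s k) (s (k+1)) = 2"

(* Z^{\<oplus>\<nat>}: finitely supported integer sequences indexed by \<nat> = {1,2,...};
   represented as nat \<Rightarrow> int with value 0 at the dummy index 0 *)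
definition Zfin :: "(nat \<Rightarrow> int) set" where
  "Zfin = {g. g 0 = 0 \<and> finite {u. g u \<noteq> 0}}"

(* the cone C_s; the sum over {v \<ge> u, s_v = s_u} is a finite sum over the support *)
definition cone :: "(nat \<Rightarrow> 'i) \<Rightarrow> (nat \<Rightarrow> int) set" where
  "cone s = {g \<in> Zfin. \<forall>u. 1 \<le> u \<longrightarrow> (\<Sum>v\<in>{v. u \<le> v \<and> s v = s u \<and> g v \<noteq> 0}. g v) \<ge> 0}"

definition move_map :: "('i \<Rightarrow> 'i \<Rightarrow> int) \<Rightarrow> (nat \<Rightarrow> 'i) \<Rightarrow> (nat \<Rightarrow> 'i) \<Rightarrow> nat
    \<Rightarrow> (nat \<Rightarrow> int) \<Rightarrow> (nat \<Rightarrow> int)" where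
  "move_map C s s' k g' = (let i = s k; j = s (k+1);
      A = g' k + C j i * pos (- g' (k+1));
      B = - g' (k+1) + C i j * pos (- A);
      km = uminus_seq s k; k1m = uminus_seq s (k+1);
      k1m' = uminus_seq s' (k+1); km' = uminus_seq s' k
    in (\<lambda>u.
      if u = k+3 then g' (k+2) - C j i * pos (g' (k+1)) + pos A
      else if u = k+2 then g' (k+3) - pos (- g' (k+1)) + pos B
      else if u = k+1 then - A + C j i * pos (- B)
      else if u = k then - B
      else if km > 0 \<and> u = km then g' k1m' + pos (g' (k+1)) - pos (- B)
      else if k1m > 0 \<and> u = k1m then g' km' + pos A - C j i * pos B
      else g' u))"

end

theory Submission
  imports Defs
begin

definition tsum :: "(nat \<Rightarrow> int) \<Rightarrow> (nat \<Rightarrow> bool) \<Rightarrow> int" where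
  "tsum g P = (\<Sum>v\<in>{v. P v \<and> g v \<noteq> 0}. g v)"

lemma cone_iff: "g \<in> cone s \<longleftrightarrow> g \<in> Zfin \<and> (\<forall>u. 1 \<le> u \<longrightarrow> tsum g (\<lambda>v. u \<le> v \<and> s v = s u) \<ge> 0)"
  unfolding cone_def tsum_def by (simp add: conj_assoc)

lemma tsum_split:
  assumes "finite {v. g v \<noteq> 0}"
  shows "tsum g P = (\<Sum>v\<le>M. if P v then g v else 0) + tsum g (\<lambda>v. P v \<and> M < v)"
proof -
  have e: "{v. P v \<and> g v \<noteq> 0} = {v. (P v \<and> v \<le> M) \<and> g v \<noteq> 0} \<union> {v. (P v \<and> M < v) \<and> g v \<noteq> 0}" by auto
  have f1: "finite {v. (P v \<and> v \<le> M) \<and> g v \<noteq> 0}" by (rule finite_subset[OF _ assms]) auto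
  have f2: "finite {v. (P v \<and> M < v) \<and> g v \<noteq> 0}" by (rule finite_subset[OF _ assms]) auto
  have "tsum g P = sum g {v. (P v \<and> v \<le> M) \<and> g v \<noteq> 0} + tsum g (\<lambda>v. P v \<and> M < v)"
    unfolding tsum_def e by (rule sum.union_disjoint[OF f1 f2]) auto
  moreover have "sum g {v. (P v \<and> v \<le> M) \<and> g v \<noteq> 0} = (\<Sum>v\<le>M. if P v then g v else 0)"
  proof -
    have "(\<Sum>v\<le>M. if P v then g v else 0) = sum g {v\<in>{..M}. P v}" by (subst sum.inter_filter) auto
    also have "\<dots> = sum g {v. (P v \<and> v \<le> M) \<and> g v \<noteq> 0}"
      by (rule sum.mono_neutral_right) auto
    finally show ?thesis by simp
  qed
  ultimately show ?thesis by simp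
qed

lemma tsum_cong:
  assumes "\<And>v. M < v \<Longrightarrow> g v = h v \<and> (P v \<longleftrightarrow> Q v)"
  shows "tsum g (\<lambda>v. P v \<and> M < v) = tsum h (\<lambda>v. Q v \<and> M < v)"
proof -
  have "{v. (P v \<and> M < v) \<and> g v \<noteq> 0} = {v. (Q v \<and> M < v) \<and> h v \<noteq> 0}" using assms by auto
  then show ?thesis unfolding tsum_def using assms by (intro sum.cong) auto
qed

lemma sum_upto3: "(\<Sum>v\<le>(k::nat)+3. f v) = (\<Sum>v<k. f v) + f k + f (k+1) + f (k+2) + (f (k+3)::int)"
  by (simp add: numeral_eq_Suc atMost_Suc lessThan_Suc_atMost[symmetric])

lemma sum_one_diff:
  assumes "finite A" "w \<in> A" "\<And>v. v \<in> A \<Longrightarrow> v \<noteq> w \<Longrightarrow> f v = h v"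
  shows "sum f A = sum h A + (f w - (h w::int))"
proof -
  have "sum f A = f w + sum f (A - {w})" using assms by (simp add: sum.remove)
  moreover have "sum h A = h w + sum h (A - {w})" using assms by (simp add: sum.remove)
  moreover have "sum f (A - {w}) = sum h (A - {w})" using assms by (intro sum.cong) auto
  ultimately show ?thesis by simp
qed

lemma um_less: "1 \<le> u \<Longrightarrow> uminus_seq s u < u"
  unfolding uminus_seq_def by (subst Max_less_iff) auto

lemma um_pos: "uminus_seq s u > 0 \<Longrightarrow> s (uminus_seq s u) = s u \<and> 1 \<le> uminus_seq s u"
proof -
  assume a: "uminus_seq s u > 0"
  have fin: "finite ({v. 1 \<le> v \<and> v < u \<and> s v = s u} \<union> {0})" by auto
  have "uminus_seq s u \<in> {v. 1 \<le> v \<and> v < u \<and> s v = s u} \<union> {0}"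
    unfolding uminus_seq_def by (rule Max_in[OF fin]) auto
  with a show ?thesis by auto
qed

lemma um_ge: "1 \<le> v \<Longrightarrow> v < u \<Longrightarrow> s v = s u \<Longrightarrow> v \<le> uminus_seq s u"
  unfolding uminus_seq_def by (rule Max_ge) auto

lemma cc: "(c::int) \<le> 0 \<Longrightarrow> d \<le> 0 \<Longrightarrow> c * d = 2 \<Longrightarrow> (c = -1 \<and> d = -2) \<or> (c = -2 \<and> d = -1)"
proof -
  assume a: "c \<le> 0" "d \<le> 0" "c * d = 2"
  then have "(-c) * (-d) = 2" by simp
  then have "-c dvd 2" by (metis dvd_triv_left)
  then have "-c \<le> 2" using a by (metis dvd_imp_le_int zero_neq_numeral abs_of_nonneg abs_dvd_iff neg_0_le_iff_le zero_le_numeral)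
  moreover have "c \<noteq> 0" using a by auto
  ultimately have "c = -1 \<or> c = -2" using a by auto
  then show ?thesis using a by auto
qed


lemma ar:
  fixes c c' A B x y p q :: int
  assumes "(c = -1 \<and> c' = -2) \<or> (c = -2 \<and> c' = -1)"
    and "A = y + c * pos (- x)" and "B = - x + c' * pos (- A)"
    and "0 \<le> p" "0 \<le> p + x" "0 \<le> q" "0 \<le> q + y"
  shows "0 \<le> p - pos (- x) + pos B" "0 \<le> - B + (p - pos (- x) + pos B)"
    "0 \<le> q - c * pos x + pos A" "0 \<le> (- A + c * pos (- B)) + (q - c * pos x + pos A)"
  using assms unfolding pos_def by (auto simp: max_def split: if_splits)

lemma ar2:
  fixes c c' A B x y z :: int
  assumes "(c = -1 \<and> c' = -2) \<or> (c = -2 \<and> c' = -1)"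
    and "A = y + c * pos (- x)" and "B = - x + c' * pos (- A)"
  shows "(- A + c * pos (- B)) + (z - c * pos x + pos A) + (pos A - c * pos B) = y + z"
  using assms unfolding pos_def by (auto simp: max_def split: if_splits)

theorem lemma3p8:
  fixes C :: "'i::finite \<Rightarrow> 'i \<Rightarrow> int"
    and s s' :: "nat \<Rightarrow> 'i" and k :: nat
  assumes "cartan_simple C"
    and "I_inf s"
    and "four_move C s s' k"
  shows "move_map C s s' k ` cone s' \<subseteq> cone s"
proof
  fix g assume "g \<in> move_map C s s' k ` cone s'"
  then obtain g' where g'c: "g' \<in> cone s'" and gdef: "g = move_map C s s' k g'" by auto
  have fm: "four_move C s s' k" by fact
  define i where "i = s k"
  define j where "j = s (k+1)"
  have k1: "1 \<le> k" using fm unfolding four_move_def by simp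
  have sk: "s k = i" "s (k+1) = j" "s (k+2) = i" "s (k+3) = j"
       "s' k = j" "s' (k+1) = i" "s' (k+2) = j" "s' (k+3) = i"
    using fm unfolding four_move_def i_def j_def by auto
  have sout: "\<And>u. 1 \<le> u \<Longrightarrow> u < k \<or> k + 3 < u \<Longrightarrow> s u = s' u"
    using fm unfolding four_move_def by auto
  have sl: "\<And>v. 1 \<le> v \<Longrightarrow> v < k \<Longrightarrow> s' v = s v" using sout by metis
  have prod: "C j i * C i j = 2" unfolding i_def j_def using fm unfolding four_move_def by blast
  have cs: "(\<forall>i. C i i = 2) \<and> (\<forall>i j. i \<noteq> j \<longrightarrow> C i j \<le> 0)"
    using assms(1) unfolding cartan_simple_def apply (elim conjE) apply (intro conjI) apply assumption+ done
  have ij: "i \<noteq> j"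
  proof
    assume "i = j"
    moreover have "C i i = 2" using cs by blast
    ultimately show False using prod by simp
  qed
  have offd: "\<forall>i j. i \<noteq> j \<longrightarrow> C i j \<le> 0" using cs by blast
  have cneg: "C j i \<le> 0" "C i j \<le> 0" using offd ij by auto
  have ccases: "(C j i = -1 \<and> C i j = -2) \<or> (C j i = -2 \<and> C i j = -1)"
    using cc[OF cneg prod] .
  define km where "km = uminus_seq s k"
  define k1m where "k1m = uminus_seq s (k+1)"
  have km'eq: "uminus_seq s' (k+1) = km"
  proof -
    have "{v. 1 \<le> v \<and> v < k+1 \<and> s' v = s' (k+1)} = {v. 1 \<le> v \<and> v < k \<and> s v = s k}"
      using sk ij by (auto simp: less_Suc_eq sl)
    then show ?thesis unfolding km_def uminus_seq_def by simp
  qed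
  have k1m'eq: "uminus_seq s' k = k1m"
  proof -
    have "{v. 1 \<le> v \<and> v < k \<and> s' v = s' k} = {v. 1 \<le> v \<and> v < k+1 \<and> s v = s (k+1)}"
      using sk ij by (auto simp: less_Suc_eq sl)
    then show ?thesis unfolding k1m_def uminus_seq_def by simp
  qed
  have kmlt: "km < k" unfolding km_def using um_less k1 by blast
  have kmpos: "km > 0 \<Longrightarrow> s km = i" using um_pos unfolding km_def i_def by blast
  have k1mpos: "k1m > 0 \<Longrightarrow> s k1m = j" using um_pos unfolding k1m_def j_def by blast
  have k1mlt: "k1m < k"
  proof -
    have "k1m < k+1" unfolding k1m_def by (rule um_less) simp
    moreover have "k1m \<noteq> k" using k1mpos k1 sk ij by fastforce
    ultimately show ?thesis by simp
  qed
  define A where "A = g' k + C j i * pos (- g' (k+1))"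
  define B where "B = - g' (k+1) + C i j * pos (- A)"
  have geq: "g = (\<lambda>u.
      if u = k+3 then g' (k+2) - C j i * pos (g' (k+1)) + pos A
      else if u = k+2 then g' (k+3) - pos (- g' (k+1)) + pos B
      else if u = k+1 then - A + C j i * pos (- B)
      else if u = k then - B
      else if km > 0 \<and> u = km then g' km + pos (g' (k+1)) - pos (- B)
      else if k1m > 0 \<and> u = k1m then g' k1m + pos A - C j i * pos B
      else g' u)"
    unfolding gdef move_map_def Let_def km'eq k1m'eq A_def B_def i_def j_def km_def k1m_def
    by (rule refl)
  have g3: "g (k+3) = g' (k+2) - C j i * pos (g' (k+1)) + pos A" using geq by simp
  have g2: "g (k+2) = g' (k+3) - pos (- g' (k+1)) + pos B" using geq by simp
  have g1: "g (k+1) = - A + C j i * pos (- B)" using geq by simp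
  have g0: "g k = - B" using geq by simp
  have gkm: "km > 0 \<Longrightarrow> g km = g' km + pos (g' (k+1)) - pos (- B)" using geq kmlt by simp
  have gk1m: "k1m > 0 \<Longrightarrow> g k1m = g' k1m + pos A - C j i * pos B"
    using geq k1mlt kmpos k1mpos ij by auto
  have goth: "\<And>v. v \<noteq> k \<Longrightarrow> v \<noteq> k+1 \<Longrightarrow> v \<noteq> k+2 \<Longrightarrow> v \<noteq> k+3 \<Longrightarrow>
      (v = km \<longrightarrow> km = 0) \<Longrightarrow> (v = k1m \<longrightarrow> k1m = 0) \<Longrightarrow> g v = g' v"
    using geq by auto
  have g'Z: "g' \<in> Zfin" and H: "\<And>u. 1 \<le> u \<Longrightarrow> tsum g' (\<lambda>v. u \<le> v \<and> s' v = s' u) \<ge> 0"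
    using g'c unfolding cone_iff by auto
  have finG': "finite {v. g' v \<noteq> 0}" and g'0: "g' 0 = 0" using g'Z unfolding Zfin_def by auto
  have gZ: "g \<in> Zfin"
  proof -
    have "g 0 = 0" using goth[of 0] k1 g'0 by simp
    moreover have "{v. g v \<noteq> 0} \<subseteq> {v. g' v \<noteq> 0} \<union> {k,k+1,k+2,k+3,km,k1m}"
    proof
      fix v assume v: "v \<in> {v. g v \<noteq> 0}"
      show "v \<in> {v. g' v \<noteq> 0} \<union> {k,k+1,k+2,k+3,km,k1m}"
      proof (rule ccontr)
        assume n: "v \<notin> {v. g' v \<noteq> 0} \<union> {k,k+1,k+2,k+3,km,k1m}"
        then have "g v = g' v" by (intro goth) auto
        then show False using v n by simp
      qed
    qed
    then have "finite {v. g v \<noteq> 0}" using finG' by (meson finite.emptyI finite.insertI finite_UnI finite_subset)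
    ultimately show ?thesis unfolding Zfin_def by simp
  qed
  then have finG: "finite {v. g v \<noteq> 0}" unfolding Zfin_def by simp
  define R where "R t = tsum g' (\<lambda>v. s' v = t \<and> k+3 < v)" for t
  have gbig: "g v = g' v \<and> s v = s' v" if "k + 3 < v" for v
  proof
    show "g v = g' v" by (rule goth) (use that kmlt k1mlt in auto)
    show "s v = s' v" using sout that by auto
  qed
  have Hexp: "0 \<le> (\<Sum>v<k. if u \<le> v \<and> s' v = s' u then g' v else 0)
      + (if u \<le> k \<and> s' k = s' u then g' k else 0)
      + (if u \<le> k+1 \<and> s' (k+1) = s' u then g' (k+1) else 0)
      + (if u \<le> k+2 \<and> s' (k+2) = s' u then g' (k+2) else 0)
      + (if u \<le> k+3 \<and> s' (k+3) = s' u then g' (k+3) else 0) + R (s' u)"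
    if "1 \<le> u" "u \<le> k+3" for u
  proof -
    have "tsum g' (\<lambda>v. u \<le> v \<and> s' v = s' u) = (\<Sum>v\<le>k+3. if u \<le> v \<and> s' v = s' u then g' v else 0)
         + tsum g' (\<lambda>v. (u \<le> v \<and> s' v = s' u) \<and> k+3 < v)"
      by (rule tsum_split[OF finG'])
    also have "tsum g' (\<lambda>v. (u \<le> v \<and> s' v = s' u) \<and> k+3 < v) = R (s' u)"
      unfolding R_def by (rule tsum_cong) (use that in auto)
    finally show ?thesis using H[OF that(1)] by (simp add: sum_upto3)
  qed
  have "\<forall>u. 1 \<le> u \<longrightarrow> tsum g (\<lambda>v. u \<le> v \<and> s v = s u) \<ge> 0"
  proof (intro allI impI)
    fix u :: nat assume u1: "1 \<le> u"
    have split: "tsum g (\<lambda>v. u \<le> v \<and> s v = s u) = (\<Sum>v\<le>k+3. if u \<le> v \<and> s v = s u then g v else 0)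
         + tsum g' (\<lambda>v. (u \<le> v \<and> s' v = s u) \<and> k+3 < v)"
    proof -
      have "tsum g (\<lambda>v. u \<le> v \<and> s v = s u) = (\<Sum>v\<le>k+3. if u \<le> v \<and> s v = s u then g v else 0)
         + tsum g (\<lambda>v. (u \<le> v \<and> s v = s u) \<and> k+3 < v)"
        by (rule tsum_split[OF finG])
      also have "tsum g (\<lambda>v. (u \<le> v \<and> s v = s u) \<and> k+3 < v) = tsum g' (\<lambda>v. (u \<le> v \<and> s' v = s u) \<and> k+3 < v)"
        by (rule tsum_cong) (use gbig in auto)
      finally show ?thesis .
    qed
    show "tsum g (\<lambda>v. u \<le> v \<and> s v = s u) \<ge> 0"
    proof (cases "k + 3 < u")
      case True
      have "tsum g' (\<lambda>v. u \<le> v \<and> s' v = s' u) = (\<Sum>v\<le>k+3. if u \<le> v \<and> s' v = s' u then g' v else 0)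
         + tsum g' (\<lambda>v. (u \<le> v \<and> s' v = s' u) \<and> k+3 < v)"
        by (rule tsum_split[OF finG'])
      moreover have "s' u = s u" using gbig True by simp
      moreover have "(\<Sum>v\<le>k+3. if u \<le> v \<and> s' v = s' u then g' v else 0) = 0"
        using True by (intro sum.neutral) auto
      moreover have "(\<Sum>v\<le>k+3. if u \<le> v \<and> s v = s u then g v else 0) = 0"
        using True by (intro sum.neutral) auto
      ultimately show ?thesis using split H[OF u1] by simp
    next
      case False
      then have uk3: "u \<le> k+3" by simp
      have tl: "tsum g' (\<lambda>v. (u \<le> v \<and> s' v = s u) \<and> k+3 < v) = R (s u)"
        unfolding R_def by (rule tsum_cong) (use uk3 in auto)
      have G: "tsum g (\<lambda>v. u \<le> v \<and> s v = s u) = (\<Sum>v<k. if u \<le> v \<and> s v = s u then g v else 0)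
      + (if u \<le> k \<and> s k = s u then g k else 0)
      + (if u \<le> k+1 \<and> s (k+1) = s u then g (k+1) else 0)
      + (if u \<le> k+2 \<and> s (k+2) = s u then g (k+2) else 0)
      + (if u \<le> k+3 \<and> s (k+3) = s u then g (k+3) else 0) + R (s u)"
        using split tl by (simp add: sum_upto3)
      show ?thesis
      proof (cases "k \<le> u")
        case True
        have z: "(\<Sum>v<k. if u \<le> v \<and> s v = s u then g v else 0) = 0"
          using True by (intro sum.neutral) auto
        have z': "\<And>u'. k \<le> u' \<Longrightarrow> (\<Sum>v<k. if u' \<le> v \<and> s' v = s' u' then g' v else 0) = 0"
          by (intro sum.neutral) auto
                have h0: "0 \<le> g' k + g' (k+2) + R j" using Hexp[of k] z'[of k] sk ij k1 by simp
        have h1: "0 \<le> g' (k+1) + g' (k+3) + R i" using Hexp[of "k+1"] z'[of "k+1"] sk ij k1 by simp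
        have h2: "0 \<le> g' (k+2) + R j" using Hexp[of "k+2"] z'[of "k+2"] sk ij k1 by simp
        have h3: "0 \<le> g' (k+3) + R i" using Hexp[of "k+3"] z'[of "k+3"] sk ij k1 by simp
        note a = ar[OF ccases A_def B_def, of "g' (k+3) + R i" "g' (k+2) + R j"]
        have "u = k \<or> u = k+1 \<or> u = k+2 \<or> u = k+3" using True uk3 by auto
        then show ?thesis
        proof (elim disjE)
          assume [simp]: "u = k"
          have "tsum g (\<lambda>v. u \<le> v \<and> s v = s u) = g k + g (k+2) + R i" using G z sk ij by simp
          then show ?thesis using a(2) h0 h1 h2 h3 g0 g2 by (simp add: algebra_simps)
        next
          assume [simp]: "u = k+1"
          have "tsum g (\<lambda>v. u \<le> v \<and> s v = s u) = g (k+1) + g (k+3) + R j" using G z sk ij by simp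
          then show ?thesis using a(4) h0 h1 h2 h3 g1 g3 by (simp add: algebra_simps)
        next
          assume [simp]: "u = k+2"
          have "tsum g (\<lambda>v. u \<le> v \<and> s v = s u) = g (k+2) + R i" using G z sk ij by simp
          then show ?thesis using a(1) h0 h1 h2 h3 g2 by (simp add: algebra_simps)
        next
          assume [simp]: "u = k+3"
          have "tsum g (\<lambda>v. u \<le> v \<and> s v = s u) = g (k+3) + R j" using G z sk ij by simp
          then show ?thesis using a(3) h0 h1 h2 h3 g3 by (simp add: algebra_simps)
        qed
      next
        case False
        then have uk: "u < k" by simp
        define t where "t = s u"
        have s'u: "s' u = t" using sl[OF u1 uk] t_def by simp
        have Hu: "0 \<le> (\<Sum>v<k. if u \<le> v \<and> s v = t then g' v else 0)
          + (if s' k = t then g' k else 0) + (if s' (k+1) = t then g' (k+1) else 0)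
          + (if s' (k+2) = t then g' (k+2) else 0) + (if s' (k+3) = t then g' (k+3) else 0) + R t"
        proof -
          have "(\<Sum>v<k. if u \<le> v \<and> s' v = s' u then g' v else 0) = (\<Sum>v<k. if u \<le> v \<and> s v = t then g' v else 0)"
            using sl u1 s'u by (intro sum.cong) auto
          then show ?thesis using Hexp[OF u1 uk3] uk s'u sk by simp
        qed
        have Gu: "tsum g (\<lambda>v. u \<le> v \<and> s v = s u) = (\<Sum>v<k. if u \<le> v \<and> s v = t then g v else 0)
          + (if s k = t then g k else 0) + (if s (k+1) = t then g (k+1) else 0)
          + (if s (k+2) = t then g (k+2) else 0) + (if s (k+3) = t then g (k+3) else 0) + R t"
          using G uk t_def by simp
        consider "t = i" | "t = j" | "t \<noteq> i" "t \<noteq> j" by blast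
        then show ?thesis
        proof cases
          case 1
          have kmu: "u \<le> km" unfolding km_def by (rule um_ge) (use u1 uk t_def 1 sk in auto)
          then have kmp: "km > 0" using u1 by simp
          have "(\<Sum>v<k. if u \<le> v \<and> s v = t then g v else 0) = (\<Sum>v<k. if u \<le> v \<and> s v = t then g' v else 0)
             + ((if u \<le> km \<and> s km = t then g km else 0) - (if u \<le> km \<and> s km = t then g' km else 0))"
          proof (rule sum_one_diff)
            show "km \<in> {..<k}" using kmlt by simp
            fix v assume "v \<in> {..<k}" "v \<noteq> km"
            then show "(if u \<le> v \<and> s v = t then g v else 0) = (if u \<le> v \<and> s v = t then g' v else 0)"
              using goth[of v] k1mpos 1 ij by auto
          qed simp
          then have "(\<Sum>v<k. if u \<le> v \<and> s v = t then g v else 0) = (\<Sum>v<k. if u \<le> v \<and> s v = t then g' v else 0)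
             + pos (g' (k+1)) - pos (- B)" using kmu kmpos[OF kmp] 1 gkm[OF kmp] by simp
          then show ?thesis using Gu Hu 1 sk ij g0 g2 by (simp add: pos_def max_def split: if_splits)
        next
          case 2
          have kmu: "u \<le> k1m" unfolding k1m_def by (rule um_ge) (use u1 uk t_def 2 sk in auto)
          then have kmp: "k1m > 0" using u1 by simp
          have "(\<Sum>v<k. if u \<le> v \<and> s v = t then g v else 0) = (\<Sum>v<k. if u \<le> v \<and> s v = t then g' v else 0)
             + ((if u \<le> k1m \<and> s k1m = t then g k1m else 0) - (if u \<le> k1m \<and> s k1m = t then g' k1m else 0))"
          proof (rule sum_one_diff)
            show "k1m \<in> {..<k}" using k1mlt by simp
            fix v assume "v \<in> {..<k}" "v \<noteq> k1m"
            then show "(if u \<le> v \<and> s v = t then g v else 0) = (if u \<le> v \<and> s v = t then g' v else 0)"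
              using goth[of v] kmpos 2 ij by auto
          qed simp
          then have "(\<Sum>v<k. if u \<le> v \<and> s v = t then g v else 0) = (\<Sum>v<k. if u \<le> v \<and> s v = t then g' v else 0)
             + pos A - C j i * pos B" using kmu k1mpos[OF kmp] 2 gk1m[OF kmp] by simp
          moreover note ar2[OF ccases A_def B_def, of "g' (k+2)"]
          ultimately show ?thesis using Gu Hu 2 sk ij g1 g3 by simp
        next
          case 3
          have "(\<Sum>v<k. if u \<le> v \<and> s v = t then g v else 0) = (\<Sum>v<k. if u \<le> v \<and> s v = t then g' v else 0)"
          proof (intro sum.cong refl)
            fix v assume "v \<in> {..<k}"
            then have "v < k" by simp
            show "(if u \<le> v \<and> s v = t then g v else 0) = (if u \<le> v \<and> s v = t then g' v else 0)"
            proof (cases "u \<le> v \<and> s v = t")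
              case True
              then have "g v = g' v" using \<open>v < k\<close> kmpos k1mpos 3 by (intro goth) auto
              then show ?thesis by simp
            next
              case False
              then show ?thesis by (simp only: if_False)
            qed
          qed
          then show ?thesis using Gu Hu 3 sk by simp
        qed
      qed
    qed
  qed
  then show "g \<in> cone s" using gZ unfolding cone_iff by simp
qed

end
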